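(* Let $n\ge2$ and on $\mathbf{R}^{n+1}$ minus the $x_{n+1}$-axis consider the $n$-form $$H=\sum_{j=1}^{n+1}(-1)^{j-1}\frac{x_j}{r^{n+1}}\,dx_1\wedge\cdots\wedge\widehat{dx_j}\wedge\cdots\wedge dx_{n+1},\qquad r=\sqrt{\textstyle\sum_{j=1}^{n+1}x_j^2},$$ and the $(n-1)$-form $$B=f(r,x_{n+1})\sum_{j=1}^n(-1)^{n+j}x_j\,dx_1\wedge\cdots\wedge\widehat{dx_j}\wedge\cdots\wedge dx_n,\qquad f(r,x_{n+1})=\int_0^1\frac{2^nt^{n-1}}{\{r-x_{n+1}+t^2(r+x_{n+1})\}^n}\,dt.$$ In polar coordinates $x_1=r\sin\theta_1\cos\theta_2,\ \dots,\ x_{n-1}=r\sin\theta_1\sin\theta_2\cdots\sin\theta_{n-1}\cos\theta_n,\ x_n=r\sin\theta_1\sin\theta_2\cdots\sin\theta_{n-1}\sin\theta_n,\ x_{n+1}=r\cos\theta_1$ (i.e. $x_k=r\sin\theta_1\cdots\sin\theta_k\cos\theta_{k+1}$ for $1\le k\le n-1$), one has $$H=(-1)^n\sin^{n-1}\theta_1\sin^{n-2}\theta_2\cdots\sin\theta_{n-1}\,d\theta_1\wedge\cdots\wedge d\theta_n,$$ $$B=(-1)^n g(\theta_1)\sin^{n-2}\theta_2\cdots\sin\theta_{n-1}\,d\theta_2\wedge\cdots\wedge d\theta_n,$$ where, if $n=2m-1$, $$g(\theta_1)=-\frac{(2m-3)!!}{(2m-2)!!}\left(\pi-\theta_1+\sum_{k=1}^{m-1}\frac{(2k-2)!!}{(2k-1)!!}\cos\theta_1\sin^{2k-1}\theta_1\right),$$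 and, if $n=2m-2$, $$g(\theta_1)=-\frac{(2m-4)!!}{(2m-3)!!}\left(1+\sum_{k=1}^{m-1}\frac{(2k-3)!!}{(2k-2)!!}\cos\theta_1\sin^{2k-2}\theta_1\right).$$
   Context: Double factorials use the conventions $(-1)!!=0!!=1$. The polar coordinates are taken with $r>0$, $0<\theta_1,\dots,\theta_{n-1}<\pi$, and $\theta_n$ the angular variable of the $(x_{n-1},x_n)$-plane. *)

theory Defs
  imports "HOL-Analysis.Analysis"
begin

text \<open>Double factorial on naturals; dfact on integers with (-1)!! = 0!! = 1.\<close>
fun dfn :: "nat \<Rightarrow> real" where
  "dfn 0 = 1"
| "dfn (Suc 0) = 1"
| "dfn (Suc (Suc k)) = real (k + 2) * dfn k"

definition dfact :: "int \<Rightarrow> real" where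
  "dfact z = dfn (nat z)"

definition ldet :: "nat \<Rightarrow> (nat \<Rightarrow> nat \<Rightarrow> real) \<Rightarrow> real" where
  "ldet k M = (\<Sum>p\<in>{p. p permutes {..<k}}. of_int (sign p) * (\<Prod>i<k. M i (p i)))"

text \<open>dx_{c_1} wedge ... wedge dx_{c_k} evaluated on vectors v 0, ..., v (k-1),
  where cs = [c_1,...,c_k].\<close>
definition dxs :: "nat list \<Rightarrow> (nat \<Rightarrow> nat \<Rightarrow> real) \<Rightarrow> real" where
  "dxs cs v = ldet (length cs) (\<lambda>i l. v i (cs ! l))"

text \<open>Polar coordinates: y 0 = r, y k = theta_k (1 \<le> k \<le> n); result indexed 1..n+1.\<close>
definition polar :: "nat \<Rightarrow> (nat \<Rightarrow> real) \<Rightarrow> (nat \<Rightarrow> real)" where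
  "polar n y k =
     (if 1 \<le> k \<and> k \<le> n - 1 then y 0 * (\<Prod>i\<in>{1..k}. sin (y i)) * cos (y (k+1))
      else if k = n then y 0 * (\<Prod>i\<in>{1..n}. sin (y i))
      else if k = n + 1 then y 0 * cos (y 1)
      else 0)"

definition jac :: "nat \<Rightarrow> (nat \<Rightarrow> real) \<Rightarrow> nat \<Rightarrow> nat \<Rightarrow> real" where
  "jac n y j k = deriv (\<lambda>t. polar n (y(k := t)) j) (y k)"

definition pushv :: "nat \<Rightarrow> (nat \<Rightarrow> real) \<Rightarrow> (nat \<Rightarrow> real) \<Rightarrow> (nat \<Rightarrow> real)" where
  "pushv n y w = (\<lambda>j. \<Sum>k\<le>n. jac n y j k * w k)"

definition rad :: "nat \<Rightarrow> (nat \<Rightarrow> real) \<Rightarrow> real" where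
  "rad n x = sqrt (\<Sum>j=1..n+1. x j ^ 2)"

definition Hform :: "nat \<Rightarrow> (nat \<Rightarrow> real) \<Rightarrow> (nat \<Rightarrow> nat \<Rightarrow> real) \<Rightarrow> real" where
  "Hform n x v = (\<Sum>j=1..n+1. (-1) ^ (j - 1) * (x j / rad n x ^ (n+1))
                     * dxs (filter (\<lambda>i. i \<noteq> j) [1..<n+2]) v)"

definition fB :: "nat \<Rightarrow> real \<Rightarrow> real \<Rightarrow> real" where
  "fB n r z = integral {0..1} (\<lambda>t. 2 ^ n * t ^ (n - 1) / (r - z + t^2 * (r + z)) ^ n)"

definition Bform :: "nat \<Rightarrow> (nat \<Rightarrow> real) \<Rightarrow> (nat \<Rightarrow> nat \<Rightarrow> real) \<Rightarrow> real" where
  "Bform n x v = fB n (rad n x) (x (n+1)) *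
     (\<Sum>j=1..n. (-1) ^ (n + j) * x j * dxs (filter (\<lambda>i. i \<noteq> j) [1..<n+1]) v)"

definition gfun :: "nat \<Rightarrow> real \<Rightarrow> real" where
  "gfun n th =
    (if odd n then
       (let m = (n + 1) div 2 in
        - (dfact (2*int m - 3) / dfact (2*int m - 2)) *
          (pi - th + (\<Sum>k=1..m-1. dfact (2*int k - 2) / dfact (2*int k - 1)
                                   * cos th * sin th ^ (2*k - 1))))
     else
       (let m = (n + 2) div 2 in
        - (dfact (2*int m - 4) / dfact (2*int m - 3)) *
          (1 + (\<Sum>k=1..m-1. dfact (2*int k - 3) / dfact (2*int k - 2)
                                   * cos th * sin th ^ (2*k - 2)))))"

end

theory Submission
  imports Defs "Jordan_Normal_Form.Determinant" "Jordan_Normal_Form.Column_Operations"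
begin


lemma upd_prod: "k \<notin> S \<Longrightarrow> (\<Prod>i\<in>S. f ((y(k:=a)) i)) = (\<Prod>i\<in>S. f (y i))"
  by (rule prod.cong) auto

lemma upd_prod': "k \<notin> S \<Longrightarrow> (\<Prod>i\<in>S. f (if i = k then a else y i)) = (\<Prod>i\<in>S. f (y i))"
  by (rule prod.cong) auto

lemma prod_shift1: "1 \<le> j \<Longrightarrow> (\<Prod>i\<in>{1..j}. f i) = f 1 * (\<Prod>i\<in>{1..j-1}. f (Suc i))"
proof -
  assume j: "1 \<le> j"
  have "{1..j} = insert 1 {Suc 1..Suc (j-1)}" using j by auto
  hence "(\<Prod>i\<in>{1..j}. f i) = f 1 * (\<Prod>i\<in>{Suc 1..Suc (j-1)}. f i)" by simp
  also have "(\<Prod>i\<in>{Suc 1..Suc (j-1)}. f i) = (\<Prod>i\<in>{1..j-1}. f (Suc i))"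
    by (rule prod.shift_bounds_cl_Suc_ivl)
  finally show ?thesis .
qed

lemma polar_scale: "polar n y j = y 0 * polar n (y(0:=1)) j"
  unfolding polar_def by (auto simp: upd_prod)

lemma polar_upd_big: "1 \<le> n \<Longrightarrow> n < k \<Longrightarrow> polar n (y(k:=t)) j = polar n y j"
  unfolding polar_def by (auto simp: upd_prod')

lemma polar_rec: "1 \<le> m \<Longrightarrow> polar (Suc m) y j =
   (if j = m then polar m y m * cos (y (Suc m)) else if j = Suc m then polar m y m * sin (y (Suc m))
    else if j = m + 2 then polar m y (Suc m) else polar m y j)"
  unfolding polar_def by (auto simp: prod.cl_ivl_Suc)

definition sh :: "(nat \<Rightarrow> real) \<Rightarrow> nat \<Rightarrow> real" where
  "sh y = (\<lambda>i. if i = 0 then y 0 * sin (y 1) else y (Suc i))"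

lemma polar_sh1: "1 \<le> m \<Longrightarrow> polar (Suc m) y 1 = polar m (sh y) (Suc m)"
  unfolding polar_def sh_def by auto

lemma polar_sh2: "1 \<le> m \<Longrightarrow> 2 \<le> j \<Longrightarrow> j \<le> Suc m \<Longrightarrow> polar (Suc m) y j = polar m (sh y) (j - 1)"
proof -
  assume a: "1 \<le> m" "2 \<le> j" "j \<le> Suc m"
  then obtain p where p: "j = Suc (Suc p)" by (metis add_2_eq_Suc le_Suc_ex)
  have e: "\<And>q f. (\<Prod>i\<in>{Suc 0..Suc q}. f i) = f (Suc 0) * (\<Prod>i\<in>{Suc 0..q}. f (Suc i))"
    using prod_shift1[of "Suc q" for q] by simp
  show ?thesis using a unfolding polar_def sh_def p
    by (auto simp del: prod.cl_ivl_Suc simp add: e mult.assoc)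
qed

definition dd :: "(real \<Rightarrow> real) \<Rightarrow> real \<Rightarrow> bool" where
  "dd f x \<longleftrightarrow> (\<exists>D. (f has_real_derivative D) (at x))"

lemma dd_const: "dd (\<lambda>t. c) x" unfolding dd_def by (rule exI[of _ 0]) (rule DERIV_const)
lemma dd_mult: "dd f x \<Longrightarrow> dd g x \<Longrightarrow> dd (\<lambda>t. f t * g t) x"
  unfolding dd_def
proof -
  assume "\<exists>D. (f has_real_derivative D) (at x)" "\<exists>D. (g has_real_derivative D) (at x)"
  then obtain D1 D2 where d: "(f has_real_derivative D1) (at x)" "(g has_real_derivative D2) (at x)" by blast
  show "\<exists>D. ((\<lambda>t. f t * g t) has_real_derivative D) (at x)" using DERIV_mult[OF d] by blast
qed
lemma dd_sin: "dd f x \<Longrightarrow> dd (\<lambda>t. sin (f t)) x"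
  unfolding dd_def
proof -
  assume "\<exists>D. (f has_real_derivative D) (at x)"
  then obtain D1 where d: "(f has_real_derivative D1) (at x)" by blast
  show "\<exists>D. ((\<lambda>t. sin (f t)) has_real_derivative D) (at x)" using DERIV_chain2[OF DERIV_sin d] by blast
qed
lemma dd_cos: "dd f x \<Longrightarrow> dd (\<lambda>t. cos (f t)) x"
  unfolding dd_def
proof -
  assume "\<exists>D. (f has_real_derivative D) (at x)"
  then obtain D1 where d: "(f has_real_derivative D1) (at x)" by blast
  show "\<exists>D. ((\<lambda>t. cos (f t)) has_real_derivative D) (at x)" using DERIV_chain2[OF DERIV_cos d] by blast
qed
lemma dd_upd: "dd (\<lambda>t. (y(k:=t)) i) x"
proof (cases "i = k")
  case True
  then show ?thesis unfolding dd_def by (intro exI[of _ 1]) (simp add: DERIV_ident)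
next
  case False
  then show ?thesis unfolding dd_def by (intro exI[of _ 0]) (simp add: DERIV_const)
qed
lemma dd_if: "dd f x \<Longrightarrow> dd g x \<Longrightarrow> dd (\<lambda>t. if b then f t else g t) x"
  by (cases b) simp_all
lemma dd_prod: "(\<And>i. i \<in> S \<Longrightarrow> dd (f i) x) \<Longrightarrow> dd (\<lambda>t. \<Prod>i\<in>S. f i t) x"
proof -
  assume "\<And>i. i \<in> S \<Longrightarrow> dd (f i) x"
  hence "\<forall>i\<in>S. \<exists>D. (f i has_real_derivative D) (at x)" unfolding dd_def by blast
  then obtain D where D: "\<And>i. i \<in> S \<Longrightarrow> (f i has_real_derivative D i) (at x)" by metis
  show ?thesis unfolding dd_def
    by (rule exI, rule has_field_derivative_prod[OF D])
qed

lemma polar_dd: "dd (\<lambda>t. polar n (y(k:=t)) j) x"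
  unfolding polar_def
  by (intro dd_if dd_mult dd_const dd_upd dd_prod dd_sin dd_cos)

lemma dd_deriv_mult: "dd f x \<Longrightarrow> deriv (\<lambda>t. f t * c) x = deriv f x * c"
  unfolding dd_def by (metis DERIV_cmult_right DERIV_imp_deriv)

lemma jac0: "jac n y j 0 = polar n (y(0:=1)) j"
proof -
  have e: "(\<lambda>t. polar n (y(0:=t)) j) = (\<lambda>t. t * polar n (y(0:=1)) j)"
    by (rule ext, subst polar_scale) simp
  show ?thesis unfolding jac_def e
    by (rule DERIV_imp_deriv) (auto intro!: derivative_eq_intros)
qed

lemma jac_big: "1 \<le> n \<Longrightarrow> n < k \<Longrightarrow> jac n y j k = 0"
proof -
  assume a: "1 \<le> n" "n < k"
  have "(\<lambda>t. polar n (y(k:=t)) j) = (\<lambda>t. polar n y j)" by (rule ext) (rule polar_upd_big[OF a])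
  then show ?thesis unfolding jac_def by (simp add: DERIV_imp_deriv[OF DERIV_const])
qed
lemma jac_rec: assumes m: "1 \<le> m" and b: "b \<le> Suc m"
  shows "jac (Suc m) y j b = (if j = m then (if b = Suc m then - polar m y m * sin (y (Suc m))
        else jac m y m b * cos (y (Suc m)))
     else if j = Suc m then (if b = Suc m then polar m y m * cos (y (Suc m))
        else jac m y m b * sin (y (Suc m)))
     else if j = m + 2 then jac m y (Suc m) b else jac m y j b)"
proof -
  have pr: "\<And>t. polar (Suc m) (y(b:=t)) j =
   (if j = m then polar m (y(b:=t)) m * cos ((y(b:=t)) (Suc m)) else if j = Suc m then polar m (y(b:=t)) m * sin ((y(b:=t)) (Suc m))
    else if j = m + 2 then polar m (y(b:=t)) (Suc m) else polar m (y(b:=t)) j)"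
    by (rule polar_rec[OF m])
  have dc: "deriv (\<lambda>t. c) x = 0" for c x :: real by simp
  show ?thesis
  proof (cases "b = Suc m")
    case True
    have pm: "\<And>t. polar m (y(b:=t)) i = polar m y i" for i using True m by (simp add: polar_upd_big)
    have jb: "jac m y i b = 0" for i using True m by (simp add: jac_big)
    have c: "\<And>t. (y(b:=t)) (Suc m) = t" using True by simp
    have d1: "deriv (\<lambda>t. polar m y m * cos t) (y b) = - polar m y m * sin (y b)"
      by (rule DERIV_imp_deriv) (auto intro!: derivative_eq_intros)
    have d2: "deriv (\<lambda>t. polar m y m * sin t) (y b) = polar m y m * cos (y b)"
      by (rule DERIV_imp_deriv) (auto intro!: derivative_eq_intros)
    show ?thesis
    proof (cases "j = m")
      case True
      then show ?thesis unfolding jac_def pr pm c using d1 \<open>b = Suc m\<close> by simp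
    next
      case F1: False
      show ?thesis
      proof (cases "j = Suc m")
        case True
        then show ?thesis unfolding jac_def pr pm c using d2 \<open>b = Suc m\<close> F1 by simp
      next
        case False
        then show ?thesis unfolding jac_def pr pm using F1 dc jb unfolding jac_def by simp
      qed
    qed
  next
    case False
    have c: "\<And>t. (y(b:=t)) (Suc m) = y (Suc m)" using False by simp
    show ?thesis
    proof (cases "j = m")
      case True
      then show ?thesis unfolding jac_def pr c using False by (simp add: dd_deriv_mult polar_dd)
    next
      case F1: False
      show ?thesis
      proof (cases "j = Suc m")
        case True
        then show ?thesis unfolding jac_def pr c using False F1 by (simp add: dd_deriv_mult polar_dd)
      next
        case F2: False
        then show ?thesis unfolding jac_def pr using F1 False by simp
      qed
    qed
  qed
qed

definition idx :: "nat \<Rightarrow> nat \<Rightarrow> nat" where "idx m j = (if j = 1 then Suc m else j - 1)"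

lemma polar_sh: "1 \<le> m \<Longrightarrow> 1 \<le> j \<Longrightarrow> j \<le> Suc m \<Longrightarrow> polar (Suc m) y j = polar m (sh y) (idx m j)"
  unfolding idx_def using polar_sh1 polar_sh2 by auto

lemma sh_upd: "1 \<le> b \<Longrightarrow> sh (y(Suc b := t)) = (sh y)(b := t)"
  unfolding sh_def by (rule ext) auto

lemma sh_upd1: "(sh (y(1 := t)))(0:=1) = (sh y)(0:=1)"
  unfolding sh_def by (rule ext) auto

lemma sh_upd0: "(sh (y(0 := t)))(0:=1) = (sh y)(0:=1)"
  unfolding sh_def by (rule ext) auto

lemma jac_sh: assumes "1 \<le> m" "1 \<le> j" "j \<le> Suc m" "1 \<le> b"
  shows "jac (Suc m) y j (Suc b) = jac m (sh y) (idx m j) b"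
proof -
  have "\<And>t. polar (Suc m) (y(Suc b:=t)) j = polar m ((sh y)(b:=t)) (idx m j)"
    using assms by (simp add: polar_sh sh_upd)
  moreover have "sh y b = y (Suc b)" using assms unfolding sh_def by simp
  ultimately show ?thesis unfolding jac_def by simp
qed

lemma sh0: "sh y 0 = y 0 * sin (y 1)" unfolding sh_def by simp

lemma jac_sh1: assumes "1 \<le> m" "1 \<le> j" "j \<le> Suc m"
  shows "jac (Suc m) y j 1 = y 0 * cos (y 1) * polar m ((sh y)(0:=1)) (idx m j)"
proof -
  have "\<And>t. polar (Suc m) (y(1:=t)) j = (y 0 * polar m ((sh y)(0:=1)) (idx m j)) * sin t"
  proof -
    fix t
    have "polar (Suc m) (y(1:=t)) j = polar m (sh (y(1:=t))) (idx m j)"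
      using assms by (rule polar_sh)
    also have "\<dots> = sh (y(1:=t)) 0 * polar m ((sh (y(1:=t)))(0:=1)) (idx m j)"
      by (rule polar_scale)
    also have "\<dots> = (y 0 * polar m ((sh y)(0:=1)) (idx m j)) * sin t"
      unfolding sh_upd1 sh0 by simp
    finally show "polar (Suc m) (y(1:=t)) j = (y 0 * polar m ((sh y)(0:=1)) (idx m j)) * sin t" .
  qed
  hence e: "(\<lambda>t. polar (Suc m) (y(1:=t)) j) = (\<lambda>t. (y 0 * polar m ((sh y)(0:=1)) (idx m j)) * sin t)"
    by (rule ext)
  show ?thesis unfolding jac_def e
    by (rule DERIV_imp_deriv) (auto intro!: derivative_eq_intros)
qed

lemma jac_sh0: assumes "1 \<le> m" "1 \<le> j" "j \<le> Suc m"
  shows "jac (Suc m) y j 0 = sin (y 1) * polar m ((sh y)(0:=1)) (idx m j)"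
proof -
  have "jac (Suc m) y j 0 = polar m (sh (y(0:=1))) (idx m j)"
    unfolding jac0 using assms by (rule polar_sh)
  also have "\<dots> = sh (y(0:=1)) 0 * polar m ((sh (y(0:=1)))(0:=1)) (idx m j)"
    by (rule polar_scale)
  also have "\<dots> = sin (y 1) * polar m ((sh y)(0:=1)) (idx m j)"
    unfolding sh_upd0 sh0 by simp
  finally show ?thesis .
qed

lemma polar_shx: assumes "1 \<le> m" "1 \<le> j" "j \<le> Suc m"
  shows "polar (Suc m) y j = y 0 * sin (y 1) * polar m ((sh y)(0:=1)) (idx m j)"
proof -
  have "polar (Suc m) y j = polar m (sh y) (idx m j)"
    using assms by (rule polar_sh)
  also have "\<dots> = sh y 0 * polar m ((sh y)(0:=1)) (idx m j)"
    by (rule polar_scale)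
  finally show ?thesis unfolding sh0 .
qed




definition setrow :: "real mat \<Rightarrow> nat \<Rightarrow> (nat \<Rightarrow> real) \<Rightarrow> real mat" where
  "setrow A k v = Matrix.mat (dim_row A) (dim_col A) (\<lambda>(i,j). if i = k then v j else A $$ (i,j))"

lemma setrow_carrier[simp]: "A \<in> carrier_mat n n \<Longrightarrow> setrow A k v \<in> carrier_mat n n"
  unfolding setrow_def by auto

lemma setrow_index: "A \<in> carrier_mat n n \<Longrightarrow> i < n \<Longrightarrow> j < n \<Longrightarrow>
   setrow A k v $$ (i,j) = (if i = k then v j else A $$ (i,j))"
  unfolding setrow_def by auto

lemma det_setrow_expand: assumes A: "A \<in> carrier_mat n n" and k: "k < n"
  shows "Determinant.det (setrow A k w) = (\<Sum>p\<in>{p. p permutes {0..<n}}.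
     signof p * (w (p k) * (\<Prod>i\<in>{0..<n}-{k}. A $$ (i, p i))))"
proof -
  have "Determinant.det (setrow A k w) = (\<Sum>p\<in>{p. p permutes {0..<n}}.
     signof p * (\<Prod>i\<in>{0..<n}. setrow A k w $$ (i, p i)))"
    by (rule det_def') (simp add: A)
  also have "\<dots> = (\<Sum>p\<in>{p. p permutes {0..<n}}.
     signof p * (w (p k) * (\<Prod>i\<in>{0..<n}-{k}. A $$ (i, p i))))"
  proof (rule sum.cong[OF refl])
    fix p assume "p \<in> {p. p permutes {0..<n}}"
    hence p: "p permutes {0..<n}" by simp
    have pi: "\<And>i. i < n \<Longrightarrow> p i < n" using p by (simp add: permutes_in_image)
    have "(\<Prod>i\<in>{0..<n}. setrow A k w $$ (i, p i)) = setrow A k w $$ (k, p k) * (\<Prod>i\<in>{0..<n}-{k}. setrow A k w $$ (i, p i))"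
      by (rule prod.remove) (use k in auto)
    also have "(\<Prod>i\<in>{0..<n}-{k}. setrow A k w $$ (i, p i)) = (\<Prod>i\<in>{0..<n}-{k}. A $$ (i, p i))"
      by (rule prod.cong) (auto simp: setrow_index[OF A] pi)
    finally show "signof p * (\<Prod>i\<in>{0..<n}. setrow A k w $$ (i, p i)) = signof p * (w (p k) * (\<Prod>i\<in>{0..<n}-{k}. A $$ (i, p i)))"
      using k pi by (simp add: setrow_index[OF A])
  qed
  finally show ?thesis .
qed

lemma det_setrow_lin: assumes A: "A \<in> carrier_mat n n" and k: "k < n"
  shows "Determinant.det (setrow A k (\<lambda>j. a * u j + b * v j)) = a * Determinant.det (setrow A k u) + b * Determinant.det (setrow A k v)"
  unfolding det_setrow_expand[OF A k]
  by (simp add: sum_distrib_left sum.distrib[symmetric] algebra_simps)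

lemma setrow_comm: "p \<noteq> q \<Longrightarrow> setrow (setrow A p X) q Y = setrow (setrow A q Y) p X"
  unfolding setrow_def by (rule eq_matI) auto

lemma setrow_same: "A \<in> carrier_mat n n \<Longrightarrow> (\<And>j. j < n \<Longrightarrow> X j = A $$ (k, j)) \<Longrightarrow> setrow A k X = A"
  unfolding setrow_def by (rule eq_matI) auto

lemma det_setrow_ident: assumes A: "A \<in> carrier_mat n n" and pq: "p \<noteq> q" "p < n" "q < n"
  shows "Determinant.det (setrow (setrow A p u) q u) = 0"
  by (rule det_identical_rows[OF _ pq(1) pq(2) pq(3)]) (use A pq in \<open>auto simp: setrow_def\<close>)

lemma det_setrow_swap: assumes A: "A \<in> carrier_mat n n" and pq: "p \<noteq> q" "p < n" "q < n"
  shows "Determinant.det (setrow (setrow A p v) q u) = - Determinant.det (setrow (setrow A p u) q v)"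
proof -
  have "setrow (setrow A p v) q u = swaprows p q (setrow (setrow A p u) q v)"
    unfolding setrow_def mat_swaprows_def by (rule eq_matI) (use pq A in auto)
  moreover have "setrow (setrow A p u) q v \<in> carrier_mat n n" using A by simp
  ultimately show ?thesis using det_swaprows[OF pq(2) pq(3) pq(1)] by metis
qed

lemma det_rot: assumes A: "A \<in> carrier_mat n n" and pq: "p \<noteq> q" "p < n" "q < n"
  and rp: "\<And>j. j < n \<Longrightarrow> A $$ (p, j) = c * u j + (- s) * v j"
  and rq: "\<And>j. j < n \<Longrightarrow> A $$ (q, j) = s * u j + c * v j"
  and cs: "c^2 + s^2 = 1"
  shows "Determinant.det A = Determinant.det (setrow (setrow A p u) q v)"
proof -
  let ?P = "\<lambda>j. c * u j + (- s) * v j" and ?Q = "\<lambda>j. s * u j + c * v j"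
  let ?B = "setrow (setrow A p u) q v"
  have A1: "A = setrow (setrow A p ?P) q ?Q"
    unfolding setrow_def by (rule eq_matI) (use A rp rq in auto)
  have "Determinant.det (setrow (setrow A p ?P) q ?Q) = s * Determinant.det (setrow (setrow A p ?P) q u) + c * Determinant.det (setrow (setrow A p ?P) q v)"
    by (rule det_setrow_lin) (use A pq in auto)
  also have "setrow (setrow A p ?P) q u = setrow (setrow A q u) p ?P" by (rule setrow_comm[OF pq(1)])
  also have "setrow (setrow A p ?P) q v = setrow (setrow A q v) p ?P" by (rule setrow_comm[OF pq(1)])
  also have "Determinant.det (setrow (setrow A q u) p ?P) = c * Determinant.det (setrow (setrow A q u) p u) + (- s) * Determinant.det (setrow (setrow A q u) p v)"
    by (rule det_setrow_lin) (use A pq in auto)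
  also have "Determinant.det (setrow (setrow A q v) p ?P) = c * Determinant.det (setrow (setrow A q v) p u) + (- s) * Determinant.det (setrow (setrow A q v) p v)"
    by (rule det_setrow_lin) (use A pq in auto)
  also have "Determinant.det (setrow (setrow A q u) p u) = 0" using det_setrow_ident[OF A] pq by metis
  also have "Determinant.det (setrow (setrow A q v) p v) = 0" using det_setrow_ident[OF A] pq by metis
  also have "setrow (setrow A q v) p u = ?B" by (rule setrow_comm) (use pq in auto)
  also have "Determinant.det (setrow (setrow A q u) p v) = - Determinant.det ?B"
    using det_setrow_swap[OF A pq(1)[symmetric] pq(3) pq(2), of u v] setrow_comm[OF pq(1)[symmetric], of A v u] by simp
  finally have "Determinant.det A = (s^2 + c^2) * Determinant.det ?B" using A1 by (simp add: algebra_simps power2_eq_square)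
  then show ?thesis using cs by (simp add: add.commute)
qed

definition Jm :: "nat \<Rightarrow> (nat \<Rightarrow> real) \<Rightarrow> real mat" where
  "Jm n y = Matrix.mat (Suc n) (Suc n) (\<lambda>(a,b). jac n y (Suc a) b)"

lemma Jm_carrier[simp]: "Jm n y \<in> carrier_mat (Suc n) (Suc n)" unfolding Jm_def by simp
lemma Jm_dims[simp]: "dim_row (Jm n y) = Suc n" "dim_col (Jm n y) = Suc n" unfolding Jm_def by simp_all
lemma Jm_index: "a < Suc n \<Longrightarrow> b < Suc n \<Longrightarrow> Jm n y $$ (a,b) = jac n y (Suc a) b"
  unfolding Jm_def by simp

lemma polar_mm: "1 \<le> m \<Longrightarrow> polar m y m = y 0 * (\<Prod>i=1..m. sin (y i))"
  unfolding polar_def by simp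

lemma prodpow: "1 \<le> m \<Longrightarrow> (\<Prod>i=1..m. (s i::real) ^ (Suc m - i)) = (\<Prod>i=1..m. s i) * (\<Prod>i=1..m-1. s i ^ (m - i))"
proof -
  assume m: "1 \<le> m"
  have "(\<Prod>i=1..m. s i ^ (Suc m - i)) = (\<Prod>i=1..m. s i * s i ^ (m - i))"
    by (rule prod.cong) (auto simp: Suc_diff_le)
  also have "\<dots> = (\<Prod>i=1..m. s i) * (\<Prod>i=1..m. s i ^ (m - i))" by (rule prod.distrib)
  also have "(\<Prod>i=1..m. s i ^ (m - i)) = (\<Prod>i=1..m-1. s i ^ (m - i))"
  proof -
    obtain k where k: "m = Suc k" using m by (cases m) auto
    show ?thesis unfolding k by (simp add: prod.cl_ivl_Suc)
  qed
  finally show ?thesis .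
qed

lemma detJ_step: assumes m: "1 \<le> m"
  shows "Determinant.det (Jm (Suc m) y) = - polar m y m * Determinant.det (Jm m y)"
proof -
  let ?A = "Jm (Suc m) y"
  define c where "c = cos (y (Suc m))"
  define s where "s = sin (y (Suc m))"
  define Q where "Q = polar m y m"
  define u where "u = (\<lambda>j. if j < Suc m then jac m y m j else 0)"
  define v where "v = (\<lambda>j. if j = Suc m then Q else 0)"
  let ?K = "setrow (setrow ?A (m-1) u) m v"
  have A: "?A \<in> carrier_mat (Suc (Suc m)) (Suc (Suc m))" by simp
  have sm: "Suc (m - 1) = m" using m by simp
  have "Determinant.det ?A = Determinant.det ?K"
  proof (rule det_rot[OF A])
    show "m - 1 \<noteq> m" "m - 1 < Suc (Suc m)" "m < Suc (Suc m)" using m by auto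
    show "c^2 + s^2 = 1" unfolding c_def s_def by simp
    fix j assume j: "j < Suc (Suc m)"
    have e1: "?A $$ (m - 1, j) = jac (Suc m) y m j" using j m by (simp add: Jm_index sm)
    have e2: "?A $$ (m, j) = jac (Suc m) y (Suc m) j" using j m by (simp add: Jm_index)
    show "?A $$ (m - 1, j) = c * u j + - s * v j"
      using j m unfolding e1 u_def v_def c_def s_def Q_def
      by (auto simp: jac_rec[OF m])
    show "?A $$ (m, j) = s * u j + c * v j"
      using j m unfolding e2 u_def v_def c_def s_def Q_def
      by (auto simp: jac_rec[OF m])
  qed
  also have "Determinant.det ?K = (\<Sum>j<Suc (Suc m). ?K $$ (m, j) * cofactor ?K m j)"
    by (rule laplace_expansion_row) auto
  also have "\<dots> = (\<Sum>j<Suc (Suc m). if j = Suc m then Q * cofactor ?K m (Suc m) else 0)"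
    by (rule sum.cong) (auto simp: setrow_index[OF A] setrow_index[OF setrow_carrier[OF A]] v_def)
  also have "\<dots> = Q * cofactor ?K m (Suc m)" by simp
  finally have d1: "Determinant.det ?A = Q * cofactor ?K m (Suc m)" .
  have md: "mat_delete ?K m (Suc m) = Jm m y"
  proof (rule eq_matI)
    show "dim_row (mat_delete ?K m (Suc m)) = dim_row (Jm m y)" by (simp add: setrow_def)
    show "dim_col (mat_delete ?K m (Suc m)) = dim_col (Jm m y)" by (simp add: setrow_def)
    fix i j assume i: "i < dim_row (Jm m y)" and j: "j < dim_col (Jm m y)"
    hence i': "i < Suc m" and j': "j < Suc m" by auto
    have "mat_delete ?K m (Suc m) $$ (i,j) = ?K $$ (if i < m then i else Suc i, j)"
      unfolding mat_delete_def using i' j' by (simp add: setrow_def)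
    also have "\<dots> = Jm m y $$ (i,j)"
    proof (cases "i < m - 1")
      case True
      then show ?thesis using i' j' m
        by (auto simp: setrow_index[OF A] setrow_index[OF setrow_carrier[OF A]] Jm_index jac_rec[OF m])
    next
      case False
      then consider "i = m - 1" | "i = m" using i' by linarith
      then show ?thesis
      proof cases
        case 1
        then show ?thesis using i' j' m
          by (auto simp: setrow_index[OF A] setrow_index[OF setrow_carrier[OF A]] Jm_index u_def sm)
      next
        case 2
        then show ?thesis using i' j' m
          by (auto simp: setrow_index[OF A] setrow_index[OF setrow_carrier[OF A]] Jm_index jac_rec[OF m])
      qed
    qed
    finally show "mat_delete ?K m (Suc m) $$ (i,j) = Jm m y $$ (i,j)" .
  qed
  show ?thesis unfolding d1 cofactor_def md Q_def by simp
qed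

lemma jac1: "jac 1 y 1 0 = sin (y 1)" "jac 1 y 2 0 = cos (y 1)"
   "jac 1 y 1 1 = y 0 * cos (y 1)" "jac 1 y 2 1 = - y 0 * sin (y 1)"
proof -
  show "jac 1 y 1 0 = sin (y 1)" "jac 1 y 2 0 = cos (y 1)" unfolding jac0 polar_def by simp_all
  have e1: "(\<lambda>t. polar 1 (y(1:=t)) 1) = (\<lambda>t. y 0 * sin t)" unfolding polar_def by auto
  have e2: "(\<lambda>t. polar 1 (y(1:=t)) 2) = (\<lambda>t. y 0 * cos t)" unfolding polar_def by auto
  show "jac 1 y 1 1 = y 0 * cos (y 1)" unfolding jac_def e1
    by (rule DERIV_imp_deriv) (auto intro!: derivative_eq_intros)
  show "jac 1 y 2 1 = - y 0 * sin (y 1)" unfolding jac_def e2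
    by (rule DERIV_imp_deriv) (auto intro!: derivative_eq_intros)
qed

lemma detJ1: "Determinant.det (Jm 1 y) = - y 0"
proof -
  let ?A = "Jm 1 y"
  have A: "?A \<in> carrier_mat 2 2" using Jm_carrier[of 1 y] by (simp only: Suc_1)
  have "Determinant.det ?A = (\<Sum>j<2. ?A $$ (0, j) * cofactor ?A 0 j)"
    by (rule laplace_expansion_row[OF A]) simp
  also have "\<dots> = ?A $$ (0,0) * cofactor ?A 0 0 + ?A $$ (0,1) * cofactor ?A 0 1"
    by (simp add: numeral_2_eq_2)
  also have "cofactor ?A 0 0 = ?A $$ (1,1)"
    unfolding cofactor_def by (subst det_single) (auto simp: mat_delete_def)
  also have "cofactor ?A 0 1 = - ?A $$ (1,0)"
    unfolding cofactor_def by (subst det_single) (auto simp: mat_delete_def)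
  also have "?A $$ (0,0) = sin (y 1)" using Jm_index[of 0 1 0 y] jac1 by simp
  also have "?A $$ (1,1) = - y 0 * sin (y 1)" using Jm_index[of 1 1 1 y] jac1 by (simp add: numeral_2_eq_2)
  also have "?A $$ (0,1) = y 0 * cos (y 1)" using Jm_index[of 0 1 1 y] jac1 by simp
  also have "?A $$ (1,0) = cos (y 1)" using Jm_index[of 1 1 0 y] jac1 by (simp add: numeral_2_eq_2)
  finally have "Determinant.det ?A = sin (y 1) * (- y 0 * sin (y 1)) + y 0 * cos (y 1) * (- cos (y 1))" .
  also have "\<dots> = - y 0 * ((sin (y 1))^2 + (cos (y 1))^2)"
  proof -
    have "\<And>p q b::real. p * (- b * p) + b * q * - q = - b * (p^2 + q^2)" by (simp add: power2_eq_square algebra_simps)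
    then show ?thesis by blast
  qed
  also have "\<dots> = - y 0" by (simp only: sin_cos_squared_add mult_1_right)
  finally show ?thesis .
qed

lemma detJ: "1 \<le> n \<Longrightarrow> Determinant.det (Jm n y) = (-1)^n * y 0 ^ n * (\<Prod>i=1..n-1. sin (y i) ^ (n - i))"
proof (induction n rule: nat_induct_at_least)
  case base
  then show ?case using detJ1[of y] by simp
next
  case (Suc m)
  have "Determinant.det (Jm (Suc m) y) = - polar m y m * Determinant.det (Jm m y)" by (rule detJ_step[OF Suc.hyps])
  also have "\<dots> = (-1)^(Suc m) * y 0 ^ (Suc m) * ((\<Prod>i=1..m. sin (y i)) * (\<Prod>i=1..m-1. sin (y i) ^ (m - i)))"
    unfolding Suc.IH polar_mm[OF Suc.hyps] by (simp add: algebra_simps)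
  also have "\<dots> = (-1)^(Suc m) * y 0 ^ (Suc m) * (\<Prod>i=1..Suc m - 1. sin (y i) ^ (Suc m - i))"
    using prodpow[OF Suc.hyps, of "\<lambda>i. sin (y i)"] by simp
  finally show ?case .
qed




lemma dfn_pos: "dfn k > 0"
  by (induction k rule: dfn.induct) auto

lemma dfn_SS: "dfn (Suc (Suc k)) = real (k + 2) * dfn k" by simp

lemma dfn_odd: "dfn (2*M+1) = real (2*M+1) * dfn (2*M-1)"
  by (cases M) (auto simp: numeral_2_eq_2)

lemma dfn_even: "1 \<le> M \<Longrightarrow> dfn (2*M) = real (2*M) * dfn (2*M-2)"
  by (cases M) (auto simp: numeral_2_eq_2)

lemma gen: "(k::real) \<noteq> 0 \<Longrightarrow> a / (k * b) * k = a / b"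
  by (cases "b = 0") (simp_all add: field_simps)

definition T :: "nat \<Rightarrow> real \<Rightarrow> real" where
  "T M th = (\<Sum>k=1..M. dfn (2*k-2) / dfn (2*k-1) * cos th * sin th ^ (2*k-1))"

definition U :: "nat \<Rightarrow> real \<Rightarrow> real" where
  "U M th = (\<Sum>k=1..M. dfn (2*k-3) / dfn (2*k-2) * cos th * sin th ^ (2*k-2))"

lemma alg1: "(c::real)^2 = 1 - x^2 \<Longrightarrow> x * x ^ j = x ^ Suc j"
  by simp

lemma alg: fixes x c d K P :: real assumes "c^2 = 1 - x^2"
  shows "d * (- x * (x * P) + c * (K * P * c)) = d*K*P - d*(K+1)*(x^2*P)"
proof -
  have "c*(K*P*c) = K*P*(c^2)" by (simp add: power2_eq_square)
  also have "\<dots> = K*P*(1-x^2)" using assms by simp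
  finally have h: "c*(K*P*c) = K*P*(1-x^2)" .
  have "d * (- x * (x * P) + c * (K * P * c)) = d * (- x * (x * P) + K*P*(1-x^2))" unfolding h ..
  also have "\<dots> = d*K*P - d*(K+1)*(x^2*P)" by (simp add: algebra_simps power2_eq_square)
  finally show ?thesis .
qed

lemma T_deriv: "(T M has_real_derivative (1 - dfn (2*M) / dfn (2*M-1) * sin th ^ (2*M))) (at th)"
proof (induction M)
  case 0
  then show ?case unfolding T_def by (simp add: DERIV_const)
next
  case (Suc M)
  define d where "d = dfn (2*M) / dfn (2*M+1)"
  have Te: "T (Suc M) = (\<lambda>th. T M th + d * cos th * sin th ^ (2*M+1))"
    unfolding T_def d_def by (rule ext) simp
  have dt: "((\<lambda>th. d * cos th * sin th ^ (2*M+1)) has_real_derivative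
     d * (- sin th * (sin th * sin th ^ (2*M)) + cos th * (real (2*M+1) * sin th ^ (2*M) * cos th))) (at th)"
    apply (rule derivative_eq_intros refl)+
    apply simp
    apply (simp add: algebra_simps)
    done
  have e1: "d * real (2*M+1) = dfn (2*M) / dfn (2*M-1)"
    unfolding d_def dfn_odd by (rule gen) simp
  have e2: "d * (real (2*M+1) + 1) = dfn (2*Suc M) / dfn (2*Suc M-1)"
    unfolding d_def using dfn_pos[of "2*M"] dfn_pos[of "2*M+1"] by (simp add: field_simps)
  have cs: "(cos th)^2 = 1 - (sin th)^2" by (simp add: cos_squared_eq)
  have "1 - dfn (2*M) / dfn (2*M-1) * sin th ^ (2*M) +
     d * (- sin th * (sin th * sin th ^ (2*M)) + cos th * (real (2*M+1) * sin th ^ (2*M) * cos th))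
     = 1 - dfn (2*M) / dfn (2*M-1) * sin th ^ (2*M) + (d * real (2*M+1) * sin th ^ (2*M)
       - d * (real (2*M+1) + 1) * ((sin th)^2 * sin th ^ (2*M)))"
    unfolding alg[OF cs] ..
  also have "\<dots> = 1 - dfn (2*Suc M) / dfn (2*Suc M-1) * sin th ^ (2*Suc M)"
  proof -
    have pw: "sin th ^ (2*Suc M) = (sin th)^2 * sin th ^ (2*M)" by (simp only: mult_Suc_right power_add)
    show ?thesis by (simp only: e1 e2 pw)
  qed
  finally have eq: "1 - dfn (2*M) / dfn (2*M-1) * sin th ^ (2*M) +
     d * (- sin th * (sin th * sin th ^ (2*M)) + cos th * (real (2*M+1) * sin th ^ (2*M) * cos th))
     = 1 - dfn (2*Suc M) / dfn (2*Suc M-1) * sin th ^ (2*Suc M)" .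
  show ?case unfolding Te by (rule DERIV_add[OF Suc.IH dt, unfolded eq])
qed

lemma U_deriv: "1 \<le> M \<Longrightarrow> (U M has_real_derivative (- (dfn (2*M-1) / dfn (2*M-2)) * sin th ^ (2*M-1))) (at th)"
proof (induction M rule: nat_induct_at_least)
  case base
  have "U 1 = (\<lambda>th. cos th)" unfolding U_def by (rule ext) simp
  then show ?case by (auto intro!: derivative_eq_intros)
next
  case (Suc M)
  define d where "d = dfn (2*M-1) / dfn (2*M)"
  have Ue: "U (Suc M) = (\<lambda>th. U M th + d * cos th * sin th ^ (2*M))"
  proof (rule ext)
    fix th
    have "2 * Suc M - 3 = 2*M-1" "2 * Suc M - 2 = 2*M" by auto
    then show "U (Suc M) th = U M th + d * cos th * sin th ^ (2*M)" unfolding U_def d_def by simp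
  qed
  have dt: "((\<lambda>th. d * cos th * sin th ^ (2*M)) has_real_derivative
     d * (- sin th * sin th ^ (2*M) + cos th * (real (2*M) * sin th ^ (2*M-1) * cos th))) (at th)"
    apply (rule derivative_eq_intros refl)+
    apply simp
    apply (simp add: algebra_simps)
    done
  have e1: "d * real (2*M) = dfn (2*M-1) / dfn (2*M-2)"
    unfolding d_def dfn_even[OF Suc.hyps] by (rule gen) (use Suc.hyps in simp)
  have e2: "d * (real (2*M) + 1) = dfn (2*Suc M-1) / dfn (2*Suc M-2)"
  proof -
    have a: "2*Suc M-1 = 2*M+1" "2*Suc M-2 = 2*M" by auto
    have "dfn (2*M+1) = real (2*M+1) * dfn (2*M-1)" by (rule dfn_odd)
    then show ?thesis unfolding a d_def using dfn_pos[of "2*M"] by (simp add: field_simps)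
  qed
  have cs: "(cos th)^2 = 1 - (sin th)^2" by (simp add: cos_squared_eq)
  have h: "Suc (2*M-1) = 2*M" using Suc.hyps by simp
  have p1: "sin th ^ (2*M) = sin th * sin th ^ (2*M-1)" by (metis h power_Suc)
  have "- (dfn (2*M-1) / dfn (2*M-2)) * sin th ^ (2*M-1) +
     d * (- sin th * sin th ^ (2*M) + cos th * (real (2*M) * sin th ^ (2*M-1) * cos th))
     = - (dfn (2*M-1) / dfn (2*M-2)) * sin th ^ (2*M-1) + (d * real (2*M) * sin th ^ (2*M-1)
       - d * (real (2*M) + 1) * ((sin th)^2 * sin th ^ (2*M-1)))"
    unfolding p1 alg[OF cs] ..
  also have "\<dots> = - (dfn (2*Suc M-1) / dfn (2*Suc M-2)) * sin th ^ (2*Suc M-1)"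
  proof -
    have pw: "sin th ^ (2*Suc M-1) = (sin th)^2 * sin th ^ (2*M-1)"
    proof -
      have "2*Suc M-1 = 2 + (2*M-1)" using Suc.hyps by auto
      then show ?thesis by (simp only: power_add)
    qed
    show ?thesis by (simp only: e1 e2 pw)
  qed
  finally have eq: "- (dfn (2*M-1) / dfn (2*M-2)) * sin th ^ (2*M-1) +
     d * (- sin th * sin th ^ (2*M) + cos th * (real (2*M) * sin th ^ (2*M-1) * cos th))
     = - (dfn (2*Suc M-1) / dfn (2*Suc M-2)) * sin th ^ (2*Suc M-1)" .
  show ?case unfolding Ue by (rule DERIV_add[OF Suc.IH dt, unfolded eq])
qed

lemma natk[simp]: "nat (2 * int k - 1) = 2*k-1" "nat (2 * int k - 2) = 2*k-2"
   "nat (2 * int k - 3) = 2*k-3" "nat (2 * int k) = 2*k"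
  by auto

lemma gfun_odd: "gfun (2*M+1) th = -(dfn (2*M-1) / dfn (2*M)) * (pi - th + T M th)"
proof -
  have m: "(2*M+1+1) div 2 = Suc M" by simp
  have a: "nat (2 * int (Suc M) - 3) = 2*M-1" "nat (2 * int (Suc M) - 2) = 2*M" by auto
  have s: "(\<Sum>k=1..Suc M-1. dfact (2*int k - 2) / dfact (2*int k - 1) * cos th * sin th ^ (2*k - 1)) = T M th"
    unfolding T_def dfact_def by (rule sum.cong) (auto simp: natk)
  show ?thesis unfolding gfun_def Let_def m using s by (simp add: dfact_def a)
qed

lemma gfun_even: "1 \<le> M \<Longrightarrow> gfun (2*M) th = -(dfn (2*M-2) / dfn (2*M-1)) * (1 + U M th)"
proof -
  assume M: "1 \<le> M"
  have m: "(2*M+2) div 2 = Suc M" by simp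
  have a: "nat (2 * int (Suc M) - 4) = 2*M-2" "nat (2 * int (Suc M) - 3) = 2*M-1" by auto
  have s: "(\<Sum>k=1..Suc M-1. dfact (2*int k - 3) / dfact (2*int k - 2) * cos th * sin th ^ (2*k - 2)) = U M th"
    unfolding U_def dfact_def by (rule sum.cong) (auto simp: natk)
  show ?thesis unfolding gfun_def Let_def m using s by (simp add: dfact_def a)
qed

lemma g_deriv: assumes n: "1 \<le> n" shows "(gfun n has_real_derivative sin th ^ (n-1)) (at th)"
proof (cases "odd n")
  case True
  then obtain M where nM: "n = 2*M+1" by (metis oddE)
  define C where "C = dfn (2*M-1) / dfn (2*M)"
  have ge: "gfun n = (\<lambda>th. - C * (pi - th + T M th))" unfolding nM C_def by (rule ext) (rule gfun_odd)
  have d: "(gfun n has_real_derivative - C * (0 - 1 + (1 - dfn (2*M) / dfn (2*M-1) * sin th ^ (2*M)))) (at th)"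
    unfolding ge by (rule DERIV_cmult, rule DERIV_add[OF DERIV_diff[OF DERIV_const DERIV_ident] T_deriv])
  have "- C * (0 - 1 + (1 - dfn (2*M) / dfn (2*M-1) * sin th ^ (2*M))) = sin th ^ (n-1)"
    unfolding C_def nM using dfn_pos[of "2*M"] dfn_pos[of "2*M-1"] by simp
  then show ?thesis using d by simp
next
  case False
  then obtain M where nM: "n = 2*M" by (metis evenE)
  have M: "1 \<le> M" using n nM by simp
  define C where "C = dfn (2*M-2) / dfn (2*M-1)"
  have ge: "gfun n = (\<lambda>th. - C * (1 + U M th))" unfolding nM C_def by (rule ext) (rule gfun_even[OF M])
  have d: "(gfun n has_real_derivative - C * (0 + (- (dfn (2*M-1) / dfn (2*M-2)) * sin th ^ (2*M-1)))) (at th)"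
    unfolding ge by (rule DERIV_cmult, rule DERIV_add[OF DERIV_const U_deriv[OF M]])
  have "- C * (0 + (- (dfn (2*M-1) / dfn (2*M-2)) * sin th ^ (2*M-1))) = sin th ^ (n-1)"
    unfolding C_def nM using dfn_pos[of "2*M-2"] dfn_pos[of "2*M-1"] by simp
  then show ?thesis using d by simp
qed

lemma gfun_pi: assumes n: "1 \<le> n" shows "gfun n pi = 0"
proof (cases "odd n")
  case True
  then obtain M where nM: "n = 2*M+1" by (metis oddE)
  have "T M pi = 0" unfolding T_def by (rule sum.neutral) auto
  then show ?thesis unfolding nM gfun_odd by simp
next
  case False
  then obtain M where nM: "n = 2*M" by (metis evenE)
  have M: "1 \<le> M" using n nM by simp
  have "U M pi = (\<Sum>k\<in>insert 1 {2..M}. dfn (2*k-3) / dfn (2*k-2) * cos pi * sin pi ^ (2*k-2))"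
    unfolding U_def using M by (intro sum.cong) auto
  also have "\<dots> = -1 + (\<Sum>k\<in>{2..M}. dfn (2*k-3) / dfn (2*k-2) * cos pi * sin pi ^ (2*k-2))"
    by (subst sum.insert) auto
  also have "(\<Sum>k\<in>{2..M}. dfn (2*k-3) / dfn (2*k-2) * cos pi * sin pi ^ (2*k-2)) = 0"
    by (rule sum.neutral) auto
  finally show ?thesis unfolding nM gfun_even[OF M] by simp
qed

lemma sin2arctan: "sin (2 * arctan x) = 2*x/(1+x^2)"
proof -
  have sq: "sqrt (1 + x^2) * sqrt (1 + x^2) = 1 + x^2" by (simp add: add_pos_nonneg)
  have "sin (2 * arctan x) = 2 * (x / sqrt (1 + x^2)) * (1 / sqrt (1 + x^2))"
    by (simp add: sin_double sin_arctan cos_arctan)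
  also have "\<dots> = 2 * x / (sqrt (1 + x^2) * sqrt (1 + x^2))" by simp
  finally show ?thesis unfolding sq .
qed

lemma alg2: fixes p q r t c :: real assumes p: "p > 0" and q: "q > 0" and r: "r > 0"
  and c1: "1 - c = 2*p^2" and c2: "1 + c = 2*q^2"
  shows "(2*(t/(p/q))/(1+(t/(p/q))^2))^m * (2/((p/q)*(1+(t/(p/q))^2)))
    = (r*(2*p*q))^(Suc m) * (2^(Suc m) * t^m / (r - r*c + t^2*(r + r*c))^(Suc m))"
proof -
  define D where "D = p^2 + t^2*q^2"
  have D: "D > 0" unfolding D_def using p by (simp add: add_pos_nonneg)
  have e1: "1+(t/(p/q))^2 = D/p^2" unfolding D_def using p q by (simp add: field_simps power2_eq_square)
  have L1: "2*(t/(p/q))/(1+(t/(p/q))^2) = 2*t*q*p/D" unfolding e1 using p q D by (simp add: field_simps power2_eq_square)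
  have L2: "2/((p/q)*(1+(t/(p/q))^2)) = 2*q*p/D" unfolding e1 using p q D by (simp add: field_simps power2_eq_square)
  have "r - r*c + t^2*(r + r*c) = r*(1-c) + t^2*r*(1+c)" by (simp add: algebra_simps)
  also have "\<dots> = 2*r*D" unfolding c1 c2 D_def by (simp add: algebra_simps)
  finally have R: "r - r*c + t^2*(r + r*c) = 2*r*D" .
  have "(r*(2*p*q))^(Suc m) * (2^(Suc m) * t^m / (2*r*D)^(Suc m)) = (p*q/D)^(Suc m) * 2^(Suc m) * t^m"
    using r D by (simp add: power_mult_distrib power_divide field_simps)
  moreover have "(2*t*q*p/D)^m * (2*q*p/D) = (p*q/D)^(Suc m) * 2^(Suc m) * t^m"
    using D by (simp add: power_mult_distrib power_divide field_simps)
  ultimately show ?thesis unfolding L1 L2 R by simp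
qed

lemma fB_closed: assumes n: "1 \<le> n" and r: "r > 0" and th: "0 < th" "th < pi"
  shows "fB n r (r * cos th) * (r * sin th)^n = - gfun n th"
proof -
  obtain m where nm: "n = Suc m" using n by (cases n) auto
  define h where "h = th/2"
  define p where "p = sin h"
  define q where "q = cos h"
  have h: "0 < h" "h < pi/2" unfolding h_def using th by auto
  have p: "p > 0" unfolding p_def using h by (intro sin_gt_zero) auto
  have q: "q > 0" unfolding q_def using h by (intro cos_gt_zero) auto
  have thh: "th = 2*h" unfolding h_def by simp
  have s: "sin th = 2*p*q" unfolding thh p_def q_def by (simp add: sin_double)
  have c: "cos th = q^2 - p^2" unfolding thh p_def q_def by (simp add: cos_double)
  have pq: "p^2 + q^2 = 1" unfolding p_def q_def by simp
  have c1: "1 - cos th = 2*p^2" using c pq by simp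
  have c2: "1 + cos th = 2*q^2" using c pq by simp
  define k where "k = p/q"
  have k: "k > 0" unfolding k_def using p q by simp
  define F where "F = (\<lambda>t. - gfun n (pi - 2*arctan(t/k)))"
  define f where "f = (\<lambda>t::real. 2 ^ n * t ^ (n - 1) / (r - r * cos th + t^2 * (r + r * cos th)) ^ n)"
  have dF: "(F has_real_derivative (r * sin th)^n * f t) (at t)" for t
  proof -
    have inner: "((\<lambda>t. pi - 2*arctan(t/k)) has_real_derivative - (2 / (k * (1 + (t/k)^2)))) (at t)"
      using k by (auto intro!: derivative_eq_intros simp: field_simps)
    have "((\<lambda>t. gfun n (pi - 2*arctan(t/k))) has_real_derivative
        sin (pi - 2*arctan(t/k)) ^ (n-1) * (- (2 / (k * (1 + (t/k)^2))))) (at t)"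
      by (rule DERIV_chain2[OF g_deriv[OF n] inner])
    hence d: "(F has_real_derivative - (sin (pi - 2*arctan(t/k)) ^ (n-1) * (- (2 / (k * (1 + (t/k)^2)))))) (at t)"
      unfolding F_def by (rule DERIV_minus)
    have "- (sin (pi - 2*arctan(t/k)) ^ (n-1) * (- (2 / (k * (1 + (t/k)^2)))))
        = (2*(t/(p/q))/(1+(t/(p/q))^2))^m * (2/((p/q)*(1+(t/(p/q))^2)))"
      unfolding nm k_def by (simp add: sin2arctan)
    also have "\<dots> = (r*(2*p*q))^(Suc m) * (2^(Suc m) * t^m / (r - r*cos th + t^2*(r + r*cos th))^(Suc m))"
      by (rule alg2[OF p q r c1 c2])
    also have "\<dots> = (r * sin th)^n * f t" unfolding f_def nm s by simp
    finally have e: "- (sin (pi - 2*arctan(t/k)) ^ (n-1) * (- (2 / (k * (1 + (t/k)^2))))) = (r * sin th)^n * f t" .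
    show ?thesis using d unfolding e .
  qed
  have F0: "F 0 = 0" unfolding F_def using gfun_pi[OF n] by simp
  have F1: "F 1 = - gfun n th"
  proof -
    have t: "tan (pi/2 - h) = q/p" unfolding tan_cot p_def q_def by (simp add: tan_def)
    have "arctan (1/k) = pi/2 - h" unfolding k_def using arctan_tan[of "pi/2 - h"] h t by simp
    then show ?thesis unfolding F_def thh by simp
  qed
  have I: "((\<lambda>t. (r * sin th)^n * f t) has_integral (F 1 - F 0)) {0..1}"
    by (rule fundamental_theorem_of_calculus)
       (auto simp: has_real_derivative_iff_has_vector_derivative[symmetric] intro: has_field_derivative_at_within dF)
  define C where "C = (r * sin th)^n"
  have C: "C \<noteq> 0" unfolding C_def s using r p q by simp
  have "((\<lambda>t. 1/C * (C * f t)) has_integral (1/C * (- gfun n th))) {0..1}"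
    using has_integral_cmul[OF I, of "1/C"] unfolding F0 F1 C_def by simp
  moreover have "(\<lambda>t. 1/C * (C * f t)) = f" using C by (simp add: fun_eq_iff)
  ultimately have "(f has_integral (1/C * (- gfun n th))) {0..1}" by simp
  hence "fB n r (r * cos th) = 1/C * (- gfun n th)" unfolding fB_def f_def[symmetric] by (rule integral_unique)
  then show ?thesis using C unfolding C_def[symmetric] by simp
qed




lemma mult_entry: assumes "A \<in> carrier_mat N N" "B \<in> carrier_mat N N" "i < N" "j < N"
  shows "(A * B) $$ (i,j) = (\<Sum>k<N. A $$ (i,k) * B $$ (k,j))"
  using assms by (simp add: scalar_prod_def Matrix.row_def Matrix.col_def atLeast0LessThan)

lemma ldet_det: "ldet k F = Determinant.det (Matrix.mat k k (\<lambda>(i,j). F i j))"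
proof -
  have "Determinant.det (Matrix.mat k k (\<lambda>(i,j). F i j)) = (\<Sum>p\<in>{p. p permutes {0..<k}}.
     signof p * (\<Prod>i=0..<k. Matrix.mat k k (\<lambda>(i,j). F i j) $$ (i, p i)))"
    by (rule det_def') simp
  also have "\<dots> = (\<Sum>p\<in>{p. p permutes {..<k}}. signof p * (\<Prod>i<k. F i (p i)))"
  proof (rule sum.cong)
    show "{p. p permutes {0..<k}} = {p. p permutes {..<k}}" by (simp add: atLeast0LessThan)
    fix p assume "p \<in> {p. p permutes {..<k}}"
    hence p: "p permutes {..<k}" by simp
    have "\<And>i. i < k \<Longrightarrow> p i < k"
    proof -
      fix i assume "i < k" hence "i \<in> {..<k}" by simp
      hence "p i \<in> {..<k}" using permutes_in_image[OF p] by blast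
      thus "p i < k" by simp
    qed
    then show "signof p * (\<Prod>i=0..<k. Matrix.mat k k (\<lambda>(i,j). F i j) $$ (i, p i)) = signof p * (\<Prod>i<k. F i (p i))"
      by (simp add: atLeast0LessThan)
  qed
  finally show ?thesis unfolding ldet_def by simp
qed

lemma filt: "a \<le> j \<Longrightarrow> j < b \<Longrightarrow> filter (\<lambda>i. i \<noteq> j) [a..<b] = [a..<j] @ [Suc j..<b]"
proof -
  assume a: "a \<le> j" "j < b"
  have "[a..<b] = [a..<j] @ [j..<b]" using upt_add_eq_append[OF a(1), of "b - j"] a by simp
  also have "[j..<b] = j # [Suc j..<b]" using a by (simp add: upt_conv_Cons)
  finally have e: "[a..<b] = [a..<j] @ j # [Suc j..<b]" .
  show ?thesis unfolding e by (auto intro: filter_True)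
qed

lemma filt_len: "1 \<le> j \<Longrightarrow> j < b \<Longrightarrow> length (filter (\<lambda>i. i \<noteq> j) [1..<b]) = b - 2"
  by (simp add: filt)

lemma filt_nth: "1 \<le> j \<Longrightarrow> j < b \<Longrightarrow> l < b - 2 \<Longrightarrow>
   filter (\<lambda>i. i \<noteq> j) [1..<b] ! l = (if l < j - 1 then Suc l else l + 2)"
  by (simp add: filt nth_append)

lemma dxs_filt: assumes "1 \<le> j" "j < b"
  shows "dxs (filter (\<lambda>i. i \<noteq> j) [1..<b]) v = Determinant.det (Matrix.mat (b-2) (b-2)
     (\<lambda>(i,l). v i (if l < j - 1 then Suc l else l + 2)))"
  unfolding dxs_def ldet_det filt_len[OF assms]
proof (rule arg_cong[where f = Determinant.det], rule eq_matI)
  fix i l assume i: "i < dim_row (Matrix.mat (b-2) (b-2) (\<lambda>(i,l). v i (if l < j - 1 then Suc l else l + 2)))"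
    and l: "l < dim_col (Matrix.mat (b-2) (b-2) (\<lambda>(i,l). v i (if l < j - 1 then Suc l else l + 2)))"
  have e: "filter (\<lambda>i. i \<noteq> j) [1..<b] ! l = (if l < j - 1 then Suc l else l + 2)"
    using l by (intro filt_nth assms) simp
  show "Matrix.mat (b-2) (b-2) (\<lambda>(i,l). v i (filter (\<lambda>i. i \<noteq> j) [1..<b] ! l)) $$ (i,l) =
     Matrix.mat (b-2) (b-2) (\<lambda>(i,l). v i (if l < j - 1 then Suc l else l + 2)) $$ (i,l)"
  proof -
    have il: "i < b - 2" "l < b - 2" using i l by simp_all
    show ?thesis by (simp only: index_mat[OF il] case_prod_conv e)
  qed
qed auto

lemma sum_shift1: "(\<Sum>j=1..N. f j) = (\<Sum>l<N. f (Suc l))"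
  by (induction N) auto

lemma sq_lemma: "(a*p)^2 + (a*q)^2 = (a::real)^2 * (p^2+q^2)"
  by (simp add: power_mult_distrib algebra_simps)

lemma polar_sq: "1 \<le> n \<Longrightarrow> (\<Sum>j=1..n+1. polar n y j ^ 2) = y 0 ^ 2"
proof (induction n rule: nat_induct_at_least)
  case base
  have "(\<Sum>j=1..1+1. polar 1 y j ^ 2) = (y 0 * sin (y 1))^2 + (y 0 * cos (y 1))^2"
    by (simp add: polar_def numeral_2_eq_2)
  also have "\<dots> = y 0 ^ 2 * ((sin (y 1))^2 + (cos (y 1))^2)" by (rule sq_lemma)
  also have "\<dots> = y 0 ^ 2" by simp
  finally show ?case .
next
  case (Suc m)
  obtain k where k: "m = Suc k" using Suc.hyps by (cases m) auto
  have s3: "\<And>f. (\<Sum>j=1..Suc(Suc(Suc k)). f j) = (\<Sum>j=1..k. f j) + f (Suc k) + f (Suc (Suc k)) + f (Suc(Suc(Suc k)))"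
    by simp
  have s2: "\<And>f. (\<Sum>j=1..Suc(Suc k). f j) = (\<Sum>j=1..k. f j) + f (Suc k) + f (Suc (Suc k))"
    by simp
  let ?Q = "polar m y m"
  have "(\<Sum>j=1..Suc m+1. polar (Suc m) y j ^ 2) = (\<Sum>j=1..k. polar (Suc m) y j ^ 2) + (polar (Suc m) y m ^ 2
     + polar (Suc m) y (Suc m) ^ 2) + polar (Suc m) y (m+2) ^ 2"
    unfolding k using s3 by (simp add: add.assoc)
  also have "(\<Sum>j=1..k. polar (Suc m) y j ^ 2) = (\<Sum>j=1..k. polar m y j ^ 2)"
    by (rule sum.cong) (use Suc.hyps k in \<open>auto simp: polar_rec\<close>)
  also have "polar (Suc m) y m ^ 2 + polar (Suc m) y (Suc m) ^ 2 = ?Q^2"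
  proof -
    have "polar (Suc m) y m ^ 2 + polar (Suc m) y (Suc m) ^ 2 = (?Q * cos (y (Suc m)))^2 + (?Q * sin (y (Suc m)))^2"
      using polar_rec[OF Suc.hyps, of y m] polar_rec[OF Suc.hyps, of y "Suc m"] by simp
    also have "\<dots> = ?Q^2 * ((sin (y (Suc m)))^2 + (cos (y (Suc m)))^2)" using sq_lemma by (simp add: add.commute)
    finally show ?thesis by simp
  qed
  also have "polar (Suc m) y (m+2) = polar m y (Suc m)" using polar_rec[OF Suc.hyps, of y "m+2"] by simp
  also have "(\<Sum>j=1..k. polar m y j ^ 2) + ?Q^2 + polar m y (Suc m) ^ 2 = (\<Sum>j=1..m+1. polar m y j ^ 2)"
    unfolding k using s2 by simp
  also have "\<dots> = y 0 ^ 2" by (rule Suc.IH)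
  finally show ?case by (simp add: add.assoc)
qed

lemma rad_polar: "1 \<le> n \<Longrightarrow> y 0 > 0 \<Longrightarrow> rad n (polar n y) = y 0"
  unfolding rad_def using polar_sq by simp

lemma H_main: assumes n: "1 \<le> n" and y0: "y 0 > 0"
  shows "Hform n (polar n y) (\<lambda>i. pushv n y (w i)) = (-1)^n * (\<Prod>i=1..n-1. sin (y i) ^ (n - i)) * dxs [1..<n+1] w"
proof -
  define x where "x = polar n y"
  define v where "v = (\<lambda>i. pushv n y (w i))"
  define R where "R = y 0"
  have R: "R > 0" using y0 R_def by simp
  have rad: "rad n x = R" using rad_polar[of n y, OF n y0] x_def R_def by simp
  define M where "M = Matrix.mat (Suc n) (Suc n) (\<lambda>(i,l). if i = 0 then x (Suc l) / R^(n+1) else v (i-1) (Suc l))"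
  have Mc: "M \<in> carrier_mat (Suc n) (Suc n)" by (simp add: M_def)
  have M0: "\<And>l. l < Suc n \<Longrightarrow> M $$ (0,l) = x (Suc l) / R^(n+1)" by (simp add: M_def)
  have md: "\<And>l. l < Suc n \<Longrightarrow> mat_delete M 0 l = Matrix.mat n n (\<lambda>(i,l'). v i (if l' < l then Suc l' else l' + 2))"
    unfolding M_def mat_delete_def by (rule eq_matI) auto
  have dx: "\<And>l. l < Suc n \<Longrightarrow> dxs (filter (\<lambda>i. i \<noteq> Suc l) [1..<n+2]) v = Determinant.det (mat_delete M 0 l)"
  proof -
    fix l assume l: "l < Suc n"
    have "dxs (filter (\<lambda>i. i \<noteq> Suc l) [1..<n+2]) v = Determinant.det (Matrix.mat (n+2-2) (n+2-2)
       (\<lambda>(i,l'). v i (if l' < Suc l - 1 then Suc l' else l' + 2)))"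
      by (rule dxs_filt) (use l in auto)
    then show "dxs (filter (\<lambda>i. i \<noteq> Suc l) [1..<n+2]) v = Determinant.det (mat_delete M 0 l)"
      using md[OF l] by simp
  qed
  have H1: "Hform n x v = Determinant.det M"
  proof -
    have "Hform n x v = (\<Sum>l<Suc n. (-1)^l * (x (Suc l) / R^(n+1)) * dxs (filter (\<lambda>i. i \<noteq> Suc l) [1..<n+2]) v)"
      unfolding Hform_def rad sum_shift1 by simp
    also have "\<dots> = (\<Sum>l<Suc n. M $$ (0,l) * cofactor M 0 l)"
    proof (rule sum.cong[OF refl])
      fix l assume "l \<in> {..<Suc n}"
      hence l: "l < Suc n" by simp
      show "(-1)^l * (x (Suc l) / R^(n+1)) * dxs (filter (\<lambda>i. i \<noteq> Suc l) [1..<n+2]) v = M $$ (0,l) * cofactor M 0 l"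
        unfolding M0[OF l] cofactor_def dx[OF l] by simp
    qed
    also have "\<dots> = Determinant.det M" by (rule laplace_expansion_row[OF Mc, symmetric]) simp
    finally show ?thesis .
  qed
  define A where "A = Matrix.mat (Suc n) (Suc n) (\<lambda>(i,k). if i = 0 then (if k = 0 then 1/R^n else 0) else w (i-1) k)"
  have Ac: "A \<in> carrier_mat (Suc n) (Suc n)" by (simp add: A_def)
  have Jt: "transpose_mat (Jm n y) \<in> carrier_mat (Suc n) (Suc n)" by simp
  have MA: "M = A * transpose_mat (Jm n y)"
  proof (rule eq_matI)
    fix i l assume i: "i < dim_row (A * transpose_mat (Jm n y))" and l: "l < dim_col (A * transpose_mat (Jm n y))"
    hence i': "i < Suc n" and l': "l < Suc n" by (simp_all add: A_def)
    have "(A * transpose_mat (Jm n y)) $$ (i,l) = (\<Sum>k<Suc n. A $$ (i,k) * transpose_mat (Jm n y) $$ (k,l))"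
      by (rule mult_entry[OF Ac Jt i' l'])
    also have "\<dots> = (\<Sum>k<Suc n. A $$ (i,k) * jac n y (Suc l) k)"
      by (rule sum.cong) (use l' in \<open>auto simp: Jm_index\<close>)
    also have "\<dots> = M $$ (i,l)"
    proof (cases "i = 0")
      case True
      have "(\<Sum>k<Suc n. A $$ (i,k) * jac n y (Suc l) k) = (\<Sum>k<Suc n. if k = 0 then 1/R^n * jac n y (Suc l) 0 else 0)"
        by (rule sum.cong) (use True in \<open>auto simp: A_def\<close>)
      also have "\<dots> = 1/R^n * jac n y (Suc l) 0" by simp
      also have "\<dots> = M $$ (i,l)"
      proof -
        have ps: "polar n y (Suc l) = y 0 * polar n (y(0:=1)) (Suc l)" by (rule polar_scale)
        show ?thesis using True l' R unfolding M_def x_def jac0 by (simp add: ps R_def)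
      qed
      finally show ?thesis .
    next
      case False
      have "(\<Sum>k<Suc n. A $$ (i,k) * jac n y (Suc l) k) = (\<Sum>k<Suc n. w (i-1) k * jac n y (Suc l) k)"
        by (rule sum.cong) (use False i' in \<open>auto simp: A_def\<close>)
      also have "\<dots> = v (i-1) (Suc l)" unfolding v_def pushv_def by (simp add: lessThan_Suc_atMost mult.commute)
      also have "\<dots> = M $$ (i,l)" using False i' l' by (simp add: M_def)
      finally show ?thesis .
    qed
    finally show "M $$ (i,l) = (A * transpose_mat (Jm n y)) $$ (i,l)" by simp
  qed (simp_all add: M_def A_def)
  have dM: "Determinant.det M = Determinant.det A * Determinant.det (Jm n y)"
    unfolding MA det_mult[OF Ac Jt] det_transpose[OF Jm_carrier] ..
  have dA: "Determinant.det A = 1/R^n * dxs [1..<n+1] w"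
  proof -
    have "Determinant.det A = (\<Sum>k<Suc n. A $$ (0,k) * cofactor A 0 k)" by (rule laplace_expansion_row[OF Ac]) simp
    also have "\<dots> = (\<Sum>k<Suc n. if k = 0 then 1/R^n * cofactor A 0 0 else 0)" by (rule sum.cong) (auto simp: A_def)
    also have "\<dots> = 1/R^n * cofactor A 0 0" by simp
    also have "cofactor A 0 0 = Determinant.det (mat_delete A 0 0)" by (simp add: cofactor_def)
    also have "mat_delete A 0 0 = Matrix.mat n n (\<lambda>(i,l). w i ([1..<n+1] ! l))"
      unfolding A_def mat_delete_def by (rule eq_matI) (auto simp del: upt_Suc simp add: nth_upt)
    also have "Determinant.det (Matrix.mat n n (\<lambda>(i,l). w i ([1..<n+1] ! l))) = dxs [1..<n+1] w"
      unfolding dxs_def ldet_det by (simp del: upt_Suc)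
    finally show ?thesis .
  qed
  have "Hform n x v = 1/R^n * dxs [1..<n+1] w * ((-1)^n * R ^ n * (\<Prod>i=1..n-1. sin (y i) ^ (n - i)))"
    unfolding H1 dM dA detJ[OF n] R_def ..
  also have "\<dots> = (-1)^n * (\<Prod>i=1..n-1. sin (y i) ^ (n - i)) * dxs [1..<n+1] w" using R by (simp add: field_simps)
  finally show ?thesis unfolding x_def v_def .
qed

lemma B_main: assumes n: "2 \<le> n" and y0: "y 0 > 0" and th: "0 < y 1" "y 1 < pi"
  shows "Bform n (polar n y) (\<lambda>i. pushv n y (w i))
           = (-1) ^ n * gfun n (y 1) * (\<Prod>i=2..n-1. sin (y i) ^ (n - i)) * dxs [2..<n+1] w"
proof -
  obtain m where nm: "n = Suc m" and m: "1 \<le> m" using n by (cases n) auto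
  define x where "x = polar n y"
  define v where "v = (\<lambda>i. pushv n y (w i))"
  define \<rho> where "\<rho> = y 0 * sin (y 1)"
  define Z where "Z = (\<lambda>l. polar m ((sh y)(0:=1)) (idx m (Suc l)))"
  have rad: "rad n x = y 0" using rad_polar[of n y] n y0 x_def by simp
  have xn: "x (n+1) = y 0 * cos (y 1)" unfolding x_def polar_def by auto
  have xZ: "\<And>l. l < n \<Longrightarrow> x (Suc l) = \<rho> * Z l"
    unfolding x_def Z_def \<rho>_def nm by (rule polar_shx[OF m]) auto
  define N where "N = Matrix.mat n n (\<lambda>(i,l). if i = m then x (Suc l) else v i (Suc l))"
  have Nc: "N \<in> carrier_mat n n" by (simp add: N_def)
  have md: "\<And>l. l < n \<Longrightarrow> mat_delete N m l = Matrix.mat m m (\<lambda>(i,l'). v i (if l' < l then Suc l' else l' + 2))"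
    unfolding N_def mat_delete_def nm by (rule eq_matI) auto
  have dx: "\<And>l. l < n \<Longrightarrow> dxs (filter (\<lambda>i. i \<noteq> Suc l) [1..<n+1]) v = Determinant.det (mat_delete N m l)"
  proof -
    fix l assume l: "l < n"
    have "dxs (filter (\<lambda>i. i \<noteq> Suc l) [1..<n+1]) v = Determinant.det (Matrix.mat (n+1-2) (n+1-2)
       (\<lambda>(i,l'). v i (if l' < Suc l - 1 then Suc l' else l' + 2)))"
      by (rule dxs_filt) (use l in auto)
    then show "dxs (filter (\<lambda>i. i \<noteq> Suc l) [1..<n+1]) v = Determinant.det (mat_delete N m l)"
      using md[OF l] nm by simp
  qed
  have Nm: "\<And>l. l < n \<Longrightarrow> N $$ (m,l) = x (Suc l)" by (simp add: N_def nm)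
  have S: "(\<Sum>j=1..n. (-1)^(n+j) * x j * dxs (filter (\<lambda>i. i \<noteq> j) [1..<n+1]) v) = Determinant.det N"
  proof -
    have "(\<Sum>j=1..n. (-1)^(n+j) * x j * dxs (filter (\<lambda>i. i \<noteq> j) [1..<n+1]) v)
        = (\<Sum>l<n. (-1)^(n + Suc l) * x (Suc l) * dxs (filter (\<lambda>i. i \<noteq> Suc l) [1..<n+1]) v)"
      by (rule sum_shift1)
    also have "\<dots> = (\<Sum>l<n. N $$ (m,l) * cofactor N m l)"
    proof (rule sum.cong[OF refl])
      fix l assume "l \<in> {..<n}"
      hence l: "l < n" by simp
      have sg: "(-1::real)^(n + Suc l) = (-1)^(m+l)" unfolding nm by simp
      show "(-1)^(n + Suc l) * x (Suc l) * dxs (filter (\<lambda>i. i \<noteq> Suc l) [1..<n+1]) v = N $$ (m,l) * cofactor N m l"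
        unfolding Nm[OF l] cofactor_def dx[OF l] sg by simp
    qed
    also have "\<dots> = Determinant.det N" by (rule laplace_expansion_row[OF Nc, symmetric]) (simp add: nm)
    finally show ?thesis .
  qed
  define J2 where "J2 = swap_row_to_front (Jm m (sh y)) m"
  have J2c: "J2 \<in> carrier_mat n n" unfolding J2_def nm
    using swap_row_to_front_result[OF Jm_carrier[of m "sh y"], of m] by simp
  have J2t: "transpose_mat J2 \<in> carrier_mat n n" using J2c by simp
  have J2i: "\<And>l k. l < n \<Longrightarrow> k < n \<Longrightarrow> J2 $$ (l,k) = jac m (sh y) (idx m (Suc l)) k"
  proof -
    fix l k assume l: "l < n" and k: "k < n"
    have sr: "swap_row_to_front (Jm m (sh y)) m = Matrix.mat (Suc m) (Suc m) (\<lambda>(i,j). if i = 0 then Jm m (sh y) $$ (m,j)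
        else if i \<le> m then Jm m (sh y) $$ (i - 1, j) else Jm m (sh y) $$ (i,j))"
      by (rule swap_row_to_front_result[OF Jm_carrier]) simp
    have "J2 $$ (l,k) = (if l = 0 then Jm m (sh y) $$ (m,k) else if l \<le> m then Jm m (sh y) $$ (l - 1, k) else Jm m (sh y) $$ (l,k))"
      unfolding J2_def sr using l k nm by simp
    then show "J2 $$ (l,k) = jac m (sh y) (idx m (Suc l)) k" using l k nm by (auto simp: Jm_index idx_def)
  qed
  have J20: "\<And>l. l < n \<Longrightarrow> J2 $$ (l,0) = Z l" using J2i by (simp add: jac0 Z_def nm)
  have J2S: "\<And>l k. l < n \<Longrightarrow> k < m \<Longrightarrow> J2 $$ (l, Suc k) = jac n y (Suc l) (Suc (Suc k))"
  proof -
    fix l k assume l: "l < n" and k: "k < m"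
    have "jac (Suc m) y (Suc l) (Suc (Suc k)) = jac m (sh y) (idx m (Suc l)) (Suc k)"
      by (rule jac_sh[OF m]) (use l nm in auto)
    then show "J2 $$ (l, Suc k) = jac n y (Suc l) (Suc (Suc k))" using J2i[OF l] k nm by simp
  qed
  have jac0Z: "\<And>l. l < n \<Longrightarrow> jac n y (Suc l) 0 = sin (y 1) * Z l"
    unfolding Z_def nm by (rule jac_sh0[OF m]) auto
  have jac1Z: "\<And>l. l < n \<Longrightarrow> jac n y (Suc l) 1 = y 0 * cos (y 1) * Z l"
    unfolding Z_def nm by (rule jac_sh1[OF m]) auto
  define A2 where "A2 = Matrix.mat n n (\<lambda>(i,k). if i = m then (if k = 0 then \<rho> else 0)
     else (if k = 0 then sin (y 1) * w i 0 + y 0 * cos (y 1) * w i 1 else w i (Suc k)))"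
  have A2c: "A2 \<in> carrier_mat n n" by (simp add: A2_def)
  have NA: "N = A2 * transpose_mat J2"
  proof (rule eq_matI)
    fix i l assume i: "i < dim_row (A2 * transpose_mat J2)" and l: "l < dim_col (A2 * transpose_mat J2)"
    hence i': "i < n" and l': "l < n" using J2c by (simp_all add: A2_def)
    have "(A2 * transpose_mat J2) $$ (i,l) = (\<Sum>k<n. A2 $$ (i,k) * transpose_mat J2 $$ (k,l))"
      by (rule mult_entry[OF A2c J2t i' l'])
    also have "\<dots> = (\<Sum>k<n. A2 $$ (i,k) * J2 $$ (l,k))"
      by (rule sum.cong) (use l' J2c in auto)
    also have "\<dots> = A2 $$ (i,0) * J2 $$ (l,0) + (\<Sum>k<m. A2 $$ (i,Suc k) * J2 $$ (l,Suc k))"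
      unfolding nm by (rule sum.lessThan_Suc_shift)
    also have "\<dots> = A2 $$ (i,0) * Z l + (\<Sum>k<m. A2 $$ (i,Suc k) * jac n y (Suc l) (Suc (Suc k)))"
      using J20[OF l'] J2S[OF l'] by simp
    also have "\<dots> = N $$ (i,l)"
    proof (cases "i = m")
      case True
      then show ?thesis using i' l' xZ[OF l'] by (simp add: A2_def N_def nm)
    next
      case False
      have "v i (Suc l) = (\<Sum>k<Suc (Suc m). jac n y (Suc l) k * w i k)"
        unfolding v_def pushv_def nm by (simp add: lessThan_Suc_atMost)
      also have "\<dots> = jac n y (Suc l) 0 * w i 0 + (jac n y (Suc l) 1 * w i 1 + (\<Sum>k<m. jac n y (Suc l) (Suc (Suc k)) * w i (Suc (Suc k))))"
        by (simp only: sum.lessThan_Suc_shift One_nat_def)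
      also have "\<dots> = A2 $$ (i,0) * Z l + (\<Sum>k<m. A2 $$ (i,Suc k) * jac n y (Suc l) (Suc (Suc k)))"
        using False i' jac0Z[OF l'] jac1Z[OF l'] nm by (simp add: A2_def algebra_simps)
      finally show ?thesis using False i' l' by (simp add: N_def)
    qed
    finally show "N $$ (i,l) = (A2 * transpose_mat J2) $$ (i,l)" by simp
  qed (use J2c in \<open>simp_all add: N_def A2_def\<close>)
  have dN: "Determinant.det N = Determinant.det A2 * Determinant.det J2"
    unfolding NA det_mult[OF A2c J2t] det_transpose[OF J2c] ..
  have dJ2: "Determinant.det J2 = (-1)^m * Determinant.det (Jm m (sh y))"
    unfolding J2_def by (rule swap_row_to_front_det) auto
  have dA2: "Determinant.det A2 = \<rho> * (-1)^m * dxs [2..<n+1] w"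
  proof -
    have "Determinant.det A2 = (\<Sum>k<n. A2 $$ (m,k) * cofactor A2 m k)" by (rule laplace_expansion_row[OF A2c]) (simp add: nm)
    also have "\<dots> = (\<Sum>k<n. if k = 0 then \<rho> * cofactor A2 m 0 else 0)" by (rule sum.cong) (auto simp: A2_def nm)
    also have "\<dots> = \<rho> * cofactor A2 m 0" using nm by simp
    also have "cofactor A2 m 0 = (-1)^m * Determinant.det (mat_delete A2 m 0)" by (simp add: cofactor_def)
    also have "mat_delete A2 m 0 = Matrix.mat m m (\<lambda>(i,l). w i ([2..<n+1] ! l))"
      unfolding A2_def mat_delete_def nm by (rule eq_matI) (auto simp del: upt_Suc simp add: nth_upt)
    also have "Determinant.det (Matrix.mat m m (\<lambda>(i,l). w i ([2..<n+1] ! l))) = dxs [2..<n+1] w"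
      unfolding dxs_def ldet_det nm by (simp del: upt_Suc)
    finally show ?thesis by simp
  qed
  have shy0: "sh y 0 = \<rho>" unfolding sh_def \<rho>_def by simp
  have P: "(\<Prod>i=1..m-1. sin (sh y i) ^ (m - i)) = (\<Prod>i=2..n-1. sin (y i) ^ (n - i))"
  proof -
    have "(\<Prod>i=1..m-1. sin (sh y i) ^ (m - i)) = (\<Prod>i=1..m-1. sin (y (Suc i)) ^ (Suc m - Suc i))"
      by (rule prod.cong) (auto simp: sh_def)
    also have "\<dots> = (\<Prod>i=Suc 1..Suc (m-1). sin (y i) ^ (Suc m - i))"
      by (rule prod.shift_bounds_cl_Suc_ivl[symmetric])
    also have "\<dots> = (\<Prod>i=2..n-1. sin (y i) ^ (n - i))" using m nm by (simp add: numeral_2_eq_2)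
    finally show ?thesis .
  qed
  define P2 where "P2 = (\<Prod>i=2..n-1. sin (y i) ^ (n - i))"
  have dN2: "Determinant.det N = (-1)^m * \<rho>^n * P2 * dxs [2..<n+1] w"
  proof -
    have "Determinant.det N = \<rho> * (-1)^m * dxs [2..<n+1] w * ((-1)^m * ((-1)^m * \<rho> ^ m * P2))"
      unfolding dN dA2 dJ2 detJ[OF m] shy0 P P2_def ..
    also have "\<dots> = ((-1)^m * (-1)^m) * (-1)^m * \<rho>^(Suc m) * P2 * dxs [2..<n+1] w" by (simp add: algebra_simps)
    also have "(-1::real)^m * (-1)^m = 1" by (simp flip: power_add)
    finally show ?thesis using nm by simp
  qed
  have fB: "fB n (y 0) (y 0 * cos (y 1)) * \<rho>^n = - gfun n (y 1)"
    unfolding \<rho>_def by (rule fB_closed) (use n y0 th in auto)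
  have "Bform n x v = fB n (y 0) (y 0 * cos (y 1)) * Determinant.det N"
    unfolding Bform_def rad xn S[symmetric] ..
  also have "\<dots> = (-1)^m * (fB n (y 0) (y 0 * cos (y 1)) * \<rho>^n) * P2 * dxs [2..<n+1] w" unfolding dN2 by simp
  also have "\<dots> = (-1)^m * (- gfun n (y 1)) * P2 * dxs [2..<n+1] w" unfolding fB ..
  finally have "Bform n x v = (-1)^m * (- gfun n (y 1)) * P2 * dxs [2..<n+1] w" .
  moreover have "(-1::real)^n = - 1 * (-1)^m" using nm by simp
  ultimately show ?thesis unfolding x_def v_def P2_def by simp
qed


theorem mainTheorem3:
  fixes n :: nat and y :: "nat \<Rightarrow> real" and w :: "nat \<Rightarrow> nat \<Rightarrow> real"
  assumes "n \<ge> 2" and "y 0 > 0" and "\<forall>i\<in>{1..n-1}. 0 < y i \<and> y i < pi"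
  shows "Hform n (polar n y) (\<lambda>i. pushv n y (w i))
           = (-1) ^ n * (\<Prod>i=1..n-1. sin (y i) ^ (n - i)) * dxs [1..<n+1] w
       \<and> Bform n (polar n y) (\<lambda>i. pushv n y (w i))
           = (-1) ^ n * gfun n (y 1) * (\<Prod>i=2..n-1. sin (y i) ^ (n - i)) * dxs [2..<n+1] w"
proof
  have n1: "1 \<le> n" using assms(1) by simp
  have "1 \<in> {1..n-1}" using assms(1) by simp
  hence y1: "0 < y 1" "y 1 < pi" using assms(3) by auto
  show "Hform n (polar n y) (\<lambda>i. pushv n y (w i))
           = (-1) ^ n * (\<Prod>i=1..n-1. sin (y i) ^ (n - i)) * dxs [1..<n+1] w"
    by (rule H_main[where n=n and y=y and w=w, OF n1 assms(2)])
  show "Bform n (polar n y) (\<lambda>i. pushv n y (w i))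
           = (-1) ^ n * gfun n (y 1) * (\<Prod>i=2..n-1. sin (y i) ^ (n - i)) * dxs [2..<n+1] w"
    by (rule B_main[where n=n and y=y and w=w, OF assms(1) assms(2) y1])
qed

end
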